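(* Let $\mathbb{N}$ be a strongly connected directed graph on $\{1,\dots,m\}$ and let $n\ge 1$. For $i\in\{1,\dots,m\}$ let $\mathcal{N}_i=\{j^i_1,\dots,j^i_{m_i}\}$ be the set of neighbors of $i$ (including $i$), let $b_i$ be the $i$th unit vector of $\mathbb{R}^m$, $\tilde B_i = b_i\otimes I_n$, and $\tilde C_i=\mathrm{column}\{C_{ij^i_1},\dots,C_{ij^i_{m_i}}\}$ with $C_{ij}=(b_i'-b_j')\otimes I_n$. Then there exist matrices $\hat H_i\in\mathbb{R}^{n\times nm_i}$, $i\in\{1,\dots,m\}$, such that for every $q\in\{1,\dots,m\}$ the pair $\big(\sum_{i=1}^m\tilde B_i\hat H_i\tilde C_i,\ \tilde B_q\big)$ is controllable with controllability index $m$.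
   Context: The neighbor graph has an arc $j\to i$ iff $j$ is a neighbor of $i$. Strongly connected: directed paths exist between every ordered pair of vertices. The controllability index of a controllable pair $(F,G)$ is the smallest $k$ with $\mathrm{rank}[G\ FG\ \cdots\ F^{k-1}G]$ equal to the state dimension. *)

theory Defs
  imports "Jordan_Normal_Form.DL_Rank"
begin

(* Indices are 0-based: vertices {0..<m} stand for {1,...,m}. *)

definition kron :: "'a::times mat \<Rightarrow> 'a mat \<Rightarrow> 'a mat" where
  "kron A B = mat (dim_row A * dim_row B) (dim_col A * dim_col B)
     (\<lambda>(i,j). A $$ (i div dim_row B, j div dim_col B) * B $$ (i mod dim_row B, j mod dim_col B))"

definition unit_col :: "nat \<Rightarrow> nat \<Rightarrow> real mat" where
  "unit_col m i = mat m 1 (\<lambda>(r,_). if r = i then 1 else 0)"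

definition Btil :: "nat \<Rightarrow> nat \<Rightarrow> nat \<Rightarrow> real mat" where
  "Btil m n i = kron (unit_col m i) (1\<^sub>m n)"

definition Cmat :: "nat \<Rightarrow> nat \<Rightarrow> nat \<Rightarrow> nat \<Rightarrow> real mat" where
  "Cmat m n i j = kron (transpose_mat (unit_col m i) - transpose_mat (unit_col m j)) (1\<^sub>m n)"

fun stack :: "nat \<Rightarrow> 'a::zero mat list \<Rightarrow> 'a mat" where
  "stack nc [] = 0\<^sub>m 0 nc"
| "stack nc (A # As) = mat (dim_row A + dim_row (stack nc As)) nc
     (\<lambda>(i,j). if i < dim_row A then A $$ (i,j) else stack nc As $$ (i - dim_row A, j))"

definition Ctil :: "nat \<Rightarrow> nat \<Rightarrow> (nat \<Rightarrow> nat list) \<Rightarrow> nat \<Rightarrow> real mat" where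
  "Ctil m n nb i = stack (n * m) (map (Cmat m n i) (nb i))"

definition msum :: "nat \<Rightarrow> nat \<Rightarrow> (nat \<Rightarrow> real mat) \<Rightarrow> real mat" where
  "msum d k f = foldr (\<lambda>i acc. f i + acc) [0..<k] (0\<^sub>m d d)"

definition arcs :: "nat \<Rightarrow> (nat \<Rightarrow> nat list) \<Rightarrow> (nat \<times> nat) set" where
  "arcs m nb = {(j, i). i < m \<and> j \<in> set (nb i)}"

definition strongly_connected :: "nat \<Rightarrow> (nat \<Rightarrow> nat list) \<Rightarrow> bool" where
  "strongly_connected m nb = (\<forall>i<m. \<forall>j<m. (i, j) \<in> (arcs m nb)\<^sup>*)"

definition ctrb_mat :: "real mat \<Rightarrow> real mat \<Rightarrow> nat \<Rightarrow> real mat" where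
  "ctrb_mat F G k = mat (dim_row F) (k * dim_col G)
     (\<lambda>(r,c). ((F ^\<^sub>m (c div dim_col G)) * G) $$ (r, c mod dim_col G))"

definition mrank :: "real mat \<Rightarrow> nat" where
  "mrank A = vec_space.rank (dim_row A) A"

definition controllable :: "real mat \<Rightarrow> real mat \<Rightarrow> bool" where
  "controllable F G = (\<exists>k. mrank (ctrb_mat F G k) = dim_row F)"

definition ctrb_index :: "real mat \<Rightarrow> real mat \<Rightarrow> nat" where
  "ctrb_index F G = (LEAST k. mrank (ctrb_mat F G k) = dim_row F)"

end

theory Submission
  imports Defs
begin


lemma mult_entry:
  assumes "A \<in> carrier_mat a b" "B \<in> carrier_mat b c" "i < a" "j < c"
  shows "(A * B) $$ (i,j) = (\<Sum>k<b. A $$ (i,k) * B $$ (k,j))"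
  using assms by (auto simp: scalar_prod_def atLeast0LessThan intro!: sum.cong)

lemma sum_ivl_shift: fixes k n :: nat shows "sum g {k..<k+n} = (\<Sum>j<n. g (k+j))"
  by (induct n rule: nat.induct) (simp_all add: add.commute)

lemma sum_split:
  fixes g :: "nat \<Rightarrow> 'a::comm_monoid_add"
  shows "(\<Sum>s<a*n. g s) = (\<Sum>i<a. \<Sum>j<n. g (i*n+j))"
proof -
  have "(\<Sum>s<a*n. g s) = (\<Sum>i<a. sum g {i*n..<i*n+n})"
    by (rule sum.nat_group[symmetric])
  also have "\<dots> = (\<Sum>i<a. \<Sum>j<n. g (i*n+j))"
    by (simp only: sum_ivl_shift)
  finally show ?thesis .
qed

lemma kron_carrier: "kron A B \<in> carrier_mat (dim_row A * dim_row B) (dim_col A * dim_col B)"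
  by (simp add: kron_def)

lemma kron_index: "i < dim_row A * dim_row B \<Longrightarrow> j < dim_col A * dim_col B \<Longrightarrow>
  kron A B $$ (i,j) = A $$ (i div dim_row B, j div dim_col B) * B $$ (i mod dim_row B, j mod dim_col B)"
  by (simp add: kron_def)

lemma kronI_index:
  fixes A :: "'a::semiring_1 mat"
  assumes "A \<in> carrier_mat a b" "i < a*n" "j < b*n"
  shows "kron A (1\<^sub>m n) $$ (i,j) = (if i mod n = j mod n then A $$ (i div n, j div n) else 0)"
proof -
  have n: "n > 0" using assms by (cases n) auto
  show ?thesis using assms n by (simp add: kron_index)
qed

lemma kronI_carrier: "A \<in> carrier_mat a b \<Longrightarrow> kron A (1\<^sub>m n) \<in> carrier_mat (a*n) (b*n)"
  by (simp add: kron_def)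

lemma kronI_mult:
  fixes A :: "'a::comm_semiring_1 mat"
  assumes A: "A \<in> carrier_mat a b" and B: "B \<in> carrier_mat b c"
  shows "kron A (1\<^sub>m n) * kron B (1\<^sub>m n) = kron (A * B) (1\<^sub>m n)"
proof (rule eq_matI)
  have AB: "A * B \<in> carrier_mat a c" using A B by simp
  show "dim_row (kron A (1\<^sub>m n) * kron B (1\<^sub>m n)) = dim_row (kron (A * B) (1\<^sub>m n))"
    using A B by (simp add: kron_def)
  show "dim_col (kron A (1\<^sub>m n) * kron B (1\<^sub>m n)) = dim_col (kron (A * B) (1\<^sub>m n))"
    using A B by (simp add: kron_def)
  fix i j assume i: "i < dim_row (kron (A * B) (1\<^sub>m n))" and j: "j < dim_col (kron (A * B) (1\<^sub>m n))"
  then have i: "i < a*n" and j: "j < c*n" using A B by (auto simp: kron_def)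
  have n: "n > 0" using i by (cases n) auto
  have ia: "i div n < a" using i n by (simp add: less_mult_imp_div_less)
  have jc: "j div n < c" using j n by (simp add: less_mult_imp_div_less)
  have "(kron A (1\<^sub>m n) * kron B (1\<^sub>m n)) $$ (i,j) =
     (\<Sum>s<b*n. kron A (1\<^sub>m n) $$ (i,s) * kron B (1\<^sub>m n) $$ (s,j))"
    by (rule mult_entry[OF kronI_carrier[OF A] kronI_carrier[OF B] i j])
  also have "\<dots> = (\<Sum>t<b. \<Sum>u<n. kron A (1\<^sub>m n) $$ (i,t*n+u) * kron B (1\<^sub>m n) $$ (t*n+u,j))"
    by (rule sum_split)
  also have "\<dots> = (\<Sum>t<b. \<Sum>u<n. (if u = i mod n \<and> u = j mod n then A $$ (i div n, t) * B $$ (t, j div n) else 0))"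
  proof (intro sum.cong refl)
    fix t u assume t: "t \<in> {..<b}" and u: "u \<in> {..<n}"
    have tu: "t*n+u < b*n"
    proof -
      have "Suc t * n \<le> b * n" using t by (intro mult_le_mono1) simp
      then show ?thesis using u by simp
    qed
    have d: "(t*n+u) div n = t" "(t*n+u) mod n = u" using u n by auto
    show "kron A (1\<^sub>m n) $$ (i,t*n+u) * kron B (1\<^sub>m n) $$ (t*n+u,j) =
      (if u = i mod n \<and> u = j mod n then A $$ (i div n, t) * B $$ (t, j div n) else 0)"
      using kronI_index[OF A i tu] kronI_index[OF B tu j] d by auto
  qed
  also have "\<dots> = (\<Sum>t<b. if i mod n = j mod n then A $$ (i div n, t) * B $$ (t, j div n) else 0)"
  proof (intro sum.cong refl)
    fix t
    have "i mod n < n" using n by simp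
    then show "(\<Sum>u<n. (if u = i mod n \<and> u = j mod n then A $$ (i div n, t) * B $$ (t, j div n) else 0))
       = (if i mod n = j mod n then A $$ (i div n, t) * B $$ (t, j div n) else 0)"
      by (cases "i mod n = j mod n") (auto simp: sum.delta' intro!: sum.neutral)
  qed
  also have "\<dots> = kron (A * B) (1\<^sub>m n) $$ (i,j)"
    using kronI_index[OF AB i j] mult_entry[OF A B ia jc] by (auto simp: sum.If_cases)
  finally show "(kron A (1\<^sub>m n) * kron B (1\<^sub>m n)) $$ (i,j) = kron (A * B) (1\<^sub>m n) $$ (i,j)" .
qed



lemma stack_map:
  assumes "\<forall>x\<in>set xs. f x \<in> carrier_mat n nc"
  shows "stack nc (map f xs) \<in> carrier_mat (length xs * n) nc \<and>
    (\<forall>b c. b < length xs * n \<longrightarrow> c < nc \<longrightarrow> stack nc (map f xs) $$ (b,c) = f (xs ! (b div n)) $$ (b mod n, c))"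
  using assms
proof (induct xs)
  case Nil
  then show ?case by simp
next
  case (Cons x xs)
  then have fx: "f x \<in> carrier_mat n nc" and IH: "stack nc (map f xs) \<in> carrier_mat (length xs * n) nc"
    "\<forall>b c. b < length xs * n \<longrightarrow> c < nc \<longrightarrow> stack nc (map f xs) $$ (b,c) = f (xs ! (b div n)) $$ (b mod n, c)"
    by auto
  show ?case
  proof (intro conjI allI impI)
    show "stack nc (map f (x # xs)) \<in> carrier_mat (length (x # xs) * n) nc"
      using fx IH by auto
    fix b c assume b: "b < length (x # xs) * n" and c: "c < nc"
    show "stack nc (map f (x # xs)) $$ (b, c) = f ((x # xs) ! (b div n)) $$ (b mod n, c)"
    proof (cases "b < n")
      case True
      then show ?thesis using fx IH b c by auto
    next
      case False
      then have b1: "b - n < length xs * n" using b by auto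
      have d: "(b - n) div n = b div n - 1" "(b - n) mod n = b mod n" "b div n \<noteq> 0"
        using False le_div_geq[of n b] le_mod_geq[of n b] b by (cases n; auto)+
      have "(x # xs) ! (b div n) = xs ! (b div n - 1)" using d(3) by (cases "b div n") auto
      then show ?thesis using fx IH b1 c False d by auto
    qed
  qed
qed

lemma foldr_msum:
  assumes "\<forall>i\<in>set xs. f i \<in> carrier_mat d d"
  shows "foldr (\<lambda>i acc. f i + acc) xs (0\<^sub>m d d) \<in> carrier_mat d d \<and>
    (\<forall>r c. r < d \<longrightarrow> c < d \<longrightarrow> foldr (\<lambda>i acc. f i + acc) xs (0\<^sub>m d d) $$ (r,c) = (\<Sum>i\<leftarrow>xs. f i $$ (r,c)))"
  using assms by (induct xs) auto

lemma msum_carrier: "(\<forall>i<k. f i \<in> carrier_mat d d) \<Longrightarrow> msum d k f \<in> carrier_mat d d"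
  unfolding msum_def using foldr_msum[of "[0..<k]" f d] by auto

lemma msum_index: "(\<forall>i<k. f i \<in> carrier_mat d d) \<Longrightarrow> r < d \<Longrightarrow> c < d \<Longrightarrow>
   msum d k f $$ (r,c) = (\<Sum>i<k. f i $$ (r,c))"
  unfolding msum_def using foldr_msum[of "[0..<k]" f d]
  by (auto simp: sum_set_upt_conv_sum_list_nat[symmetric] atLeast0LessThan)



definition Lmat :: "nat \<Rightarrow> (nat \<Rightarrow> nat list) \<Rightarrow> (nat \<Rightarrow> nat \<Rightarrow> real) \<Rightarrow> real mat" where
 "Lmat m nb h = mat m m (\<lambda>(i,j). \<Sum>t<length (nb i). h i (nb i ! t) *
     ((if i = j then 1 else 0) - (if j = nb i ! t then 1 else 0)))"

definition Hmat :: "nat \<Rightarrow> (nat \<Rightarrow> nat list) \<Rightarrow> (nat \<Rightarrow> nat \<Rightarrow> real) \<Rightarrow> nat \<Rightarrow> real mat" where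
 "Hmat n nb h i = mat n (n * length (nb i)) (\<lambda>(a,b). if a = b mod n then h i (nb i ! (b div n)) else 0)"

lemma Cmat_carrier: "Cmat m n i j \<in> carrier_mat n (n*m)"
  by (simp add: Cmat_def kron_def unit_col_def mult.commute)

lemma Cmat_index: assumes "a < n" "c < n*m"
  shows "Cmat m n i j $$ (a,c) = (if a = c mod n then (if c div n = i then 1 else 0) - (if c div n = j then 1 else 0) else 0)"
proof -
  have C: "transpose_mat (unit_col m i) - transpose_mat (unit_col m j) \<in> carrier_mat 1 m"
    by (auto simp: unit_col_def)
  have n: "n > 0" using assms by auto
  have c: "c div n < m" using assms(2) n by (simp add: less_mult_imp_div_less mult.commute)
  have a: "a < 1 * n" "c < m * n" using assms by (auto simp: mult.commute)
  show ?thesis unfolding Cmat_def kronI_index[OF C a]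
    using assms c n by (simp add: unit_col_def)
qed

lemma Ctil_carrier: "Ctil m n nb i \<in> carrier_mat (length (nb i) * n) (n*m)"
  unfolding Ctil_def using stack_map[of "nb i" "Cmat m n i" n "n*m"] Cmat_carrier by auto

lemma Ctil_index: "b < length (nb i) * n \<Longrightarrow> c < n*m \<Longrightarrow>
  Ctil m n nb i $$ (b,c) = Cmat m n i (nb i ! (b div n)) $$ (b mod n, c)"
  unfolding Ctil_def using stack_map[of "nb i" "Cmat m n i" n "n*m"] Cmat_carrier by auto

lemma Hmat_carrier: "Hmat n nb h i \<in> carrier_mat n (length (nb i) * n)"
  by (simp add: Hmat_def mult.commute)

lemma HC_carrier: "Hmat n nb h i * Ctil m n nb i \<in> carrier_mat n (n*m)"
  using Hmat_carrier Ctil_carrier by (rule mult_carrier_mat)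

lemma HC_index:
  assumes a: "a < n" and c: "c < n*m" and im: "i < m"
  shows "(Hmat n nb h i * Ctil m n nb i) $$ (a,c) =
     (if a = c mod n then Lmat m nb h $$ (i, c div n) else 0)"
proof -
  let ?l = "length (nb i)"
  have n: "n > 0" using a by auto
  have cm: "c div n < m" using c n by (simp add: less_mult_imp_div_less mult.commute)
  have "(Hmat n nb h i * Ctil m n nb i) $$ (a,c) =
     (\<Sum>s<?l*n. Hmat n nb h i $$ (a,s) * Ctil m n nb i $$ (s,c))"
    by (rule mult_entry[OF Hmat_carrier Ctil_carrier a c])
  also have "\<dots> = (\<Sum>t<?l. \<Sum>u<n. Hmat n nb h i $$ (a,t*n+u) * Ctil m n nb i $$ (t*n+u,c))"
    by (rule sum_split)
  also have "\<dots> = (\<Sum>t<?l. \<Sum>u<n. if u = a \<and> u = c mod n then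
        h i (nb i ! t) * ((if c div n = i then 1 else 0) - (if c div n = nb i ! t then 1 else 0)) else 0)"
  proof (intro sum.cong refl)
    fix t u assume t: "t \<in> {..<?l}" and u: "u \<in> {..<n}"
    have tu: "t*n+u < ?l*n"
    proof -
      have "Suc t * n \<le> ?l * n" using t by (intro mult_le_mono1) simp
      then show ?thesis using u by simp
    qed
    have d: "(t*n+u) div n = t" "(t*n+u) mod n = u" using u n by auto
    have tu': "t*n+u < n * ?l" using tu by (simp add: mult.commute)
    show "Hmat n nb h i $$ (a,t*n+u) * Ctil m n nb i $$ (t*n+u,c) = (if u = a \<and> u = c mod n then
        h i (nb i ! t) * ((if c div n = i then 1 else 0) - (if c div n = nb i ! t then 1 else 0)) else 0)"
      unfolding Ctil_index[of "t*n+u" nb i n c m, OF tu c] using d u a c tu' Cmat_index[OF _ c, of u] by (auto simp: Hmat_def)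
  qed
  also have "\<dots> = (\<Sum>t<?l. if a = c mod n then
        h i (nb i ! t) * ((if c div n = i then 1 else 0) - (if c div n = nb i ! t then 1 else 0)) else 0)"
  proof (intro sum.cong refl)
    fix t
    show "(\<Sum>u<n. if u = a \<and> u = c mod n then
        h i (nb i ! t) * ((if c div n = i then 1 else 0) - (if c div n = nb i ! t then 1 else 0)) else (0::real)) =
        (if a = c mod n then
        h i (nb i ! t) * ((if c div n = i then 1 else 0) - (if c div n = nb i ! t then 1 else 0)) else 0)"
      using a by (cases "a = c mod n") (auto simp: sum.delta' intro!: sum.neutral)
  qed
  also have "\<dots> = (if a = c mod n then Lmat m nb h $$ (i, c div n) else 0)"
    using im cm by (cases "a = c mod n") (auto simp: Lmat_def)
  finally show ?thesis .
qed


lemma Btil_carrier: "Btil m n i \<in> carrier_mat (n*m) n"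
  by (simp add: Btil_def kron_def unit_col_def mult.commute)

lemma Btil_index: assumes "r < n*m" "a < n"
  shows "Btil m n i $$ (r,a) = (if r div n = i \<and> r mod n = a then 1 else 0)"
proof -
  have C: "unit_col m i \<in> carrier_mat m 1" by (simp add: unit_col_def)
  have n: "n > 0" using assms by auto
  have r: "r div n < m" using assms(1) n by (simp add: less_mult_imp_div_less mult.commute)
  have a: "r < m * n" "a < 1 * n" using assms by (auto simp: mult.commute)
  show ?thesis unfolding Btil_def kronI_index[OF C a]
    using assms r n by (auto simp: unit_col_def)
qed

lemma term_carrier: "Btil m n i * Hmat n nb h i * Ctil m n nb i \<in> carrier_mat (n*m) (n*m)"
  using Btil_carrier Hmat_carrier Ctil_carrier by (metis mult_carrier_mat)

lemma term_index: assumes r: "r < n*m" and c: "c < n*m" and im: "i < m"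
  shows "(Btil m n i * Hmat n nb h i * Ctil m n nb i) $$ (r,c) =
    (if r div n = i \<and> r mod n = c mod n then Lmat m nb h $$ (i, c div n) else 0)"
proof -
  have n: "n > 0" using r by (cases n) auto
  have "Btil m n i * Hmat n nb h i * Ctil m n nb i = Btil m n i * (Hmat n nb h i * Ctil m n nb i)"
    using Btil_carrier Hmat_carrier Ctil_carrier by (metis assoc_mult_mat)
  also have "\<dots> $$ (r,c) = (\<Sum>a<n. Btil m n i $$ (r,a) * (Hmat n nb h i * Ctil m n nb i) $$ (a,c))"
    by (rule mult_entry[OF Btil_carrier HC_carrier r c])
  also have "\<dots> = (\<Sum>a<n. if a = r mod n then (if r div n = i \<and> r mod n = c mod n then Lmat m nb h $$ (i, c div n) else 0) else 0)"
    by (intro sum.cong refl) (auto simp: Btil_index[OF r] HC_index[OF _ c im])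
  also have "\<dots> = (if r div n = i \<and> r mod n = c mod n then Lmat m nb h $$ (i, c div n) else 0)"
    using n by (simp add: sum.delta')
  finally show ?thesis .
qed

lemma F_eq: assumes "n > 0"
  shows "msum (n * m) m (\<lambda>i. Btil m n i * Hmat n nb h i * Ctil m n nb i) = kron (Lmat m nb h) (1\<^sub>m n)"
proof -
  have L: "Lmat m nb h \<in> carrier_mat m m" by (simp add: Lmat_def)
  have car: "\<forall>i<m. Btil m n i * Hmat n nb h i * Ctil m n nb i \<in> carrier_mat (n*m) (n*m)"
    using term_carrier by auto
  show ?thesis
  proof (rule eq_matI)
    show "dim_row (msum (n * m) m (\<lambda>i. Btil m n i * Hmat n nb h i * Ctil m n nb i)) = dim_row (kron (Lmat m nb h) (1\<^sub>m n))"
      using msum_carrier[OF car] kronI_carrier[OF L, of n] by (simp add: mult.commute)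
    show "dim_col (msum (n * m) m (\<lambda>i. Btil m n i * Hmat n nb h i * Ctil m n nb i)) = dim_col (kron (Lmat m nb h) (1\<^sub>m n))"
      using msum_carrier[OF car] kronI_carrier[OF L, of n] by (simp add: mult.commute)
    fix r c assume "r < dim_row (kron (Lmat m nb h) (1\<^sub>m n))" "c < dim_col (kron (Lmat m nb h) (1\<^sub>m n))"
    then have r: "r < n*m" and c: "c < n*m" using kronI_carrier[OF L, of n] by (auto simp: mult.commute)
    have rm: "r div n < m" using r assms by (simp add: less_mult_imp_div_less mult.commute)
    have "msum (n * m) m (\<lambda>i. Btil m n i * Hmat n nb h i * Ctil m n nb i) $$ (r,c) =
       (\<Sum>i<m. (if r div n = i \<and> r mod n = c mod n then Lmat m nb h $$ (i, c div n) else 0))"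
      using msum_index[OF car r c] term_index[OF r c] by simp
    also have "\<dots> = (if r mod n = c mod n then Lmat m nb h $$ (r div n, c div n) else 0)"
      using rm by (cases "r mod n = c mod n") (auto simp: sum.delta)
    also have "\<dots> = kron (Lmat m nb h) (1\<^sub>m n) $$ (r,c)"
      using kronI_index[OF L, of r n c] r c by (simp add: mult.commute)
    finally show "msum (n * m) m (\<lambda>i. Btil m n i * Hmat n nb h i * Ctil m n nb i) $$ (r,c) = kron (Lmat m nb h) (1\<^sub>m n) $$ (r,c)" .
  qed
qed



lemma kron_one_one: "kron (1\<^sub>m m) (1\<^sub>m n) = (1\<^sub>m (m*n) :: real mat)"
proof (rule eq_matI)
  fix i j assume "i < dim_row (1\<^sub>m (m*n) :: real mat)" "j < dim_col (1\<^sub>m (m*n) :: real mat)"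
  then have i: "i < m*n" and j: "j < m*n" by auto
  have "i = j \<longleftrightarrow> i div n = j div n \<and> i mod n = j mod n"
    by (metis div_mult_mod_eq)
  then show "kron (1\<^sub>m m) (1\<^sub>m n) $$ (i, j) = (1\<^sub>m (m*n) :: real mat) $$ (i, j)"
    using kronI_index[OF one_carrier_mat i j] i j
    by (cases n) (auto simp: less_mult_imp_div_less)
qed (auto simp: kron_def)

lemma kron_pow: assumes L: "L \<in> carrier_mat m m"
  shows "kron L (1\<^sub>m n) ^\<^sub>m p = kron (L ^\<^sub>m p) (1\<^sub>m n :: real mat)"
proof (induct p)
  case 0
  then show ?case using kron_one_one[of m n] L by (simp add: kron_def)
next
  case (Suc p)
  have Lp: "L ^\<^sub>m p \<in> carrier_mat m m" using L by simp
  show ?case using Suc kronI_mult[OF Lp L, of n] by simp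
qed

lemma ctrb_kron: assumes L: "L \<in> carrier_mat m m" and n: "n > 0"
  shows "ctrb_mat (kron L (1\<^sub>m n)) (Btil m n q) k = kron (ctrb_mat L (unit_col m q) k) (1\<^sub>m n)"
proof -
  have e: "unit_col m q \<in> carrier_mat m 1" by (simp add: unit_col_def)
  have K: "ctrb_mat L (unit_col m q) k \<in> carrier_mat m k"
    using L e by (simp add: ctrb_mat_def)
  show ?thesis
  proof (rule eq_matI)
    show "dim_row (ctrb_mat (kron L (1\<^sub>m n)) (Btil m n q) k) = dim_row (kron (ctrb_mat L (unit_col m q) k) (1\<^sub>m n))"
      using L K by (simp add: ctrb_mat_def kron_def)
    show "dim_col (ctrb_mat (kron L (1\<^sub>m n)) (Btil m n q) k) = dim_col (kron (ctrb_mat L (unit_col m q) k) (1\<^sub>m n))"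
      using L K by (simp add: ctrb_mat_def kron_def Btil_def unit_col_def)
    fix r c assume "r < dim_row (kron (ctrb_mat L (unit_col m q) k) (1\<^sub>m n))"
      "c < dim_col (kron (ctrb_mat L (unit_col m q) k) (1\<^sub>m n))"
    then have r: "r < m*n" and c: "c < k*n" using K by (auto simp: kron_def)
    have Lp: "L ^\<^sub>m (c div n) \<in> carrier_mat m m" using L by simp
    have de: "dim_col (unit_col m q) = 1" by (simp add: unit_col_def)
    have Lpe: "L ^\<^sub>m (c div n) * unit_col m q \<in> carrier_mat m 1" using Lp e by simp
    have dB: "dim_col (Btil m n q) = n" by (simp add: Btil_def kron_def unit_col_def)
    have cn: "c mod n < 1 * n" using n by simp
    have ck: "c div n < k" using c n by (simp add: less_mult_imp_div_less)
    have "ctrb_mat (kron L (1\<^sub>m n)) (Btil m n q) k $$ (r,c) =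
       (kron L (1\<^sub>m n) ^\<^sub>m (c div n) * Btil m n q) $$ (r, c mod n)"
      using r c L dB by (simp add: ctrb_mat_def kron_def)
    also have "\<dots> = kron (L ^\<^sub>m (c div n) * unit_col m q) (1\<^sub>m n) $$ (r, c mod n)"
      unfolding kron_pow[OF L] Btil_def kronI_mult[OF Lp e] ..
    also have "\<dots> = (if r mod n = c mod n then (L ^\<^sub>m (c div n) * unit_col m q) $$ (r div n, 0) else 0)"
      using kronI_index[OF Lpe r cn] n by simp
    also have "\<dots> = kron (ctrb_mat L (unit_col m q) k) (1\<^sub>m n) $$ (r,c)"
      using kronI_index[OF K r c] r c n ck L by (simp add: ctrb_mat_def less_mult_imp_div_less de)
    finally show "ctrb_mat (kron L (1\<^sub>m n)) (Btil m n q) k $$ (r,c) = kron (ctrb_mat L (unit_col m q) k) (1\<^sub>m n) $$ (r,c)" .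
  qed
qed

lemma det_kron_nonzero: assumes K: "K \<in> carrier_mat m m" and d: "det K \<noteq> (0::real)"
  shows "det (kron K (1\<^sub>m n)) \<noteq> 0"
proof -
  obtain P where P: "P \<in> carrier_mat m m" and KP: "K * P = 1\<^sub>m m"
    using det_non_zero_imp_unit[OF K d, of "()"] unfolding Units_def ring_mat_def by auto
  have "kron K (1\<^sub>m n) * kron P (1\<^sub>m n) = 1\<^sub>m (m*n)"
    using kronI_mult[OF K P, of n] KP kron_one_one by simp
  then have "det (kron K (1\<^sub>m n)) * det (kron P (1\<^sub>m n)) = 1"
    using det_mult[OF kronI_carrier[OF K, of n] kronI_carrier[OF P, of n]] by simp
  then show ?thesis by auto
qed

lemma reduce_ctrb:
  assumes L: "L \<in> carrier_mat m m" and n: "n > 0"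
    and d: "det (ctrb_mat L (unit_col m q) m) \<noteq> 0"
  shows "controllable (kron L (1\<^sub>m n)) (Btil m n q) \<and> ctrb_index (kron L (1\<^sub>m n)) (Btil m n q) = m"
proof -
  have e: "unit_col m q \<in> carrier_mat m 1" by (simp add: unit_col_def)
  have K: "\<And>k. ctrb_mat L (unit_col m q) k \<in> carrier_mat m k"
    using L e by (simp add: ctrb_mat_def)
  have dF: "dim_row (kron L (1\<^sub>m n)) = m*n" using L by (simp add: kron_def)
  have rk: "mrank (ctrb_mat (kron L (1\<^sub>m n)) (Btil m n q) k) \<le> k*n" for k
    unfolding ctrb_kron[OF L n] mrank_def
    using vec_space.rank_le_nc[OF kronI_carrier[OF K[of k]], of n] kronI_carrier[OF K[of k], of n] by simp
  have full: "mrank (ctrb_mat (kron L (1\<^sub>m n)) (Btil m n q) m) = dim_row (kron L (1\<^sub>m n))"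
    unfolding ctrb_kron[OF L n] mrank_def dF
    using vec_space.det_rank_iff[OF kronI_carrier[OF K[of m], of n]] det_kron_nonzero[OF K[of m] d, of n]
      kronI_carrier[OF K[of m], of n] by simp
  have less: "mrank (ctrb_mat (kron L (1\<^sub>m n)) (Btil m n q) k) \<noteq> dim_row (kron L (1\<^sub>m n))" if "k < m" for k
  proof -
    have kn: "k*n < m*n" using mult_less_mono1[OF that n] .
    show ?thesis using rk[of k] dF kn by linarith
  qed
  show ?thesis unfolding controllable_def ctrb_index_def
  proof
    show "\<exists>k. mrank (ctrb_mat (kron L (1\<^sub>m n)) (Btil m n q) k) = dim_row (kron L (1\<^sub>m n))"
      using full by blast
    show "(LEAST k. mrank (ctrb_mat (kron L (1\<^sub>m n)) (Btil m n q) k) = dim_row (kron L (1\<^sub>m n))) = m"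
      by (rule Least_equality) (use full less in \<open>auto simp: not_less[symmetric]\<close>)
  qed
qed



lemma vander:
  fixes x c :: "nat \<Rightarrow> real"
  assumes inj: "inj_on x {..<m}" and z: "\<And>k. k < m \<Longrightarrow> (\<Sum>s<m. c s * x k ^ s) = 0"
  shows "\<And>s. s < m \<Longrightarrow> c s = 0"
proof -
  define p where "p = (\<Sum>s<m. monom (c s) s)"
  have pv: "poly p y = (\<Sum>s<m. c s * y ^ s)" for y
    unfolding p_def by (simp add: poly_sum poly_monom)
  have cf: "coeff p i = (if i < m then c i else 0)" for i
    unfolding p_def by (simp add: coeff_sum)
  have "p = 0"
  proof (rule ccontr)
    assume pnz: "p \<noteq> 0"
    then have m: "m > 0" unfolding p_def by (cases m) auto
    have deg: "degree p \<le> m - 1"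
      by (rule degree_le) (use cf in auto)
    have fin: "finite {y. poly p y = 0}" using poly_roots_finite[OF pnz] .
    have sub: "x ` {..<m} \<subseteq> {y. poly p y = 0}" using z pv by auto
    have "m = card (x ` {..<m})" using card_image[OF inj] by simp
    also have "\<dots> \<le> card {y. poly p y = 0}" using card_mono[OF fin sub] .
    also have "\<dots> \<le> degree p" using card_poly_roots_bound[OF pnz] .
    finally show False using deg m by simp
  qed
  fix s assume "s < m"
  then show "c s = 0" using cf[of s] \<open>p = 0\<close> by simp
qed

context
  fixes m :: nat and nb :: "nat \<Rightarrow> nat list" and q :: nat
  assumes nbh: "\<forall>i<m. distinct (nb i) \<and> i \<in> set (nb i) \<and> set (nb i) \<subseteq> {..<m}"
    and sc: "strongly_connected m nb" and qm: "q < m"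
begin

definition D :: "nat \<Rightarrow> nat" where "D i = (LEAST k. (q,i) \<in> (arcs m nb)^^k)"

lemma D_reach: assumes "i < m" shows "(q,i) \<in> (arcs m nb)^^(D i)"
proof -
  have "(q,i) \<in> (arcs m nb)\<^sup>*" using sc assms qm unfolding strongly_connected_def by blast
  then obtain k where "(q,i) \<in> (arcs m nb)^^k" using rtrancl_power by blast
  then show ?thesis unfolding D_def by (rule LeastI)
qed

lemma D_le: "(q,i) \<in> (arcs m nb)^^k \<Longrightarrow> D i \<le> k"
  unfolding D_def by (rule Least_le)

lemma D_q: "D q = 0"
  using D_le[of q 0] by simp

lemma D_zero: assumes "i < m" "D i = 0" shows "i = q"
  using D_reach[OF assms(1)] assms(2) by simp

lemma par_ex: assumes "i < m" "i \<noteq> q"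
  shows "\<exists>p. p \<in> set (nb i) \<and> p < m \<and> D p + 1 = D i"
proof -
  have pos: "D i > 0" using D_zero assms by blast
  then have "(q,i) \<in> (arcs m nb)^^(Suc (D i - 1))" using D_reach[OF assms(1)] by simp
  then obtain p where p1: "(q,p) \<in> (arcs m nb)^^(D i - 1)" and p2: "(p,i) \<in> arcs m nb"
    by (meson relpow_Suc_E)
  have pin: "p \<in> set (nb i)" using p2 by (simp add: arcs_def)
  have pm: "p < m" using nbh assms(1) pin by auto
  have "D p \<le> D i - 1" using D_le[OF p1] .
  moreover have "(q,i) \<in> (arcs m nb)^^(Suc (D p))"
    using D_reach[OF pm] p2 by auto
  then have "D i \<le> Suc (D p)" by (rule D_le)
  ultimately have "D p + 1 = D i" using pos by linarith
  then show ?thesis using pin pm by blast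
qed

definition par :: "nat \<Rightarrow> nat" where
  "par i = (SOME p. p \<in> set (nb i) \<and> p < m \<and> D p + 1 = D i)"

lemma par: assumes "i < m" "i \<noteq> q"
  shows "par i \<in> set (nb i)" "par i < m" "D (par i) + 1 = D i"
  using someI_ex[OF par_ex[OF assms]] unfolding par_def by auto

definition wt :: "nat \<Rightarrow> real" where "wt i = (if i = q then 0 else real i + 1)"

lemma wt_inj: "i \<noteq> j \<Longrightarrow> wt i \<noteq> wt j"
  unfolding wt_def by auto

lemma wt_nz: "i \<noteq> q \<Longrightarrow> wt i \<noteq> 0"
  unfolding wt_def by auto

lemma wt_q: "wt q = 0" unfolding wt_def by simp

definition hq :: "nat \<Rightarrow> nat \<Rightarrow> real" where
  "hq i j = (if i \<noteq> q \<and> j = par i then wt i else 0)"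

lemma par_ne: "i < m \<Longrightarrow> i \<noteq> q \<Longrightarrow> par i \<noteq> i"
  using par(3)[of i] by auto

lemma L_ent: assumes i: "i < m" and j: "j < m"
  shows "Lmat m nb hq $$ (i,j) = (if i = q then 0 else wt i * ((if i = j then 1 else 0) - (if j = par i then 1 else 0)))"
proof (cases "i = q")
  case True
  then show ?thesis using i j by (simp add: Lmat_def hq_def)
next
  case False
  have pin: "par i \<in> set (nb i)" using par(1)[OF i False] .
  then obtain s0 where s0: "s0 < length (nb i)" "nb i ! s0 = par i" by (auto simp: in_set_conv_nth)
  have dist: "distinct (nb i)" using nbh i by auto
  have eq: "hq i (nb i ! s) = (if s = s0 then wt i else 0)" if "s < length (nb i)" for s
    using False s0 that nth_eq_iff_index_eq[OF dist that s0(1)] by (auto simp: hq_def)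
  have "Lmat m nb hq $$ (i,j) = (\<Sum>s<length (nb i). hq i (nb i ! s) *
     ((if i = j then 1 else 0) - (if j = nb i ! s then 1 else 0)))"
    using i j by (simp add: Lmat_def)
  also have "\<dots> = (\<Sum>s<length (nb i). if s = s0 then wt i * ((if i = j then 1 else 0) - (if j = par i then 1 else 0)) else 0)"
    by (intro sum.cong refl) (use eq s0 in auto)
  also have "\<dots> = wt i * ((if i = j then 1 else 0) - (if j = par i then 1 else 0))"
    using s0(1) by simp
  finally show ?thesis using False by simp
qed

definition anc :: "nat \<Rightarrow> nat \<Rightarrow> nat" where "anc k s = (par ^^ s) k"

lemma anc_0: "anc k 0 = k" by (simp add: anc_def)
lemma anc_Suc: "anc k (Suc s) = par (anc k s)" by (simp add: anc_def)

lemma anc: assumes "k < m" "s \<le> D k" shows "anc k s < m \<and> D (anc k s) = D k - s"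
  using assms(2)
proof (induct s)
  case 0
  then show ?case using assms(1) by (simp add: anc_0)
next
  case (Suc s)
  then have IH: "anc k s < m" "D (anc k s) = D k - s" by auto
  have nq: "anc k s \<noteq> q" using IH(2) Suc(2) D_q by auto
  show ?case using par(2,3)[OF IH(1) nq] IH Suc(2) by (simp add: anc_Suc)
qed

lemma anc_end: "k < m \<Longrightarrow> anc k (D k) = q"
  using anc[of k "D k"] D_zero by auto

primrec Yv :: "nat \<Rightarrow> nat \<Rightarrow> real" where
  "Yv k 0 = 1"
| "Yv k (Suc s) = wt (anc k s) * Yv k s / (wt (anc k (Suc s)) - wt k)"

lemma Yv_nz: assumes "k < m" "s \<le> D k" shows "Yv k s \<noteq> 0"
  using assms(2)
proof (induct s)
  case 0
  then show ?case by simp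
next
  case (Suc s)
  have a1: "D (anc k s) = D k - s" using anc[OF assms(1)] Suc(2) by auto
  have a2: "D (anc k (Suc s)) = D k - Suc s" using anc[OF assms(1) Suc(2)] by auto
  have nq: "anc k s \<noteq> q" using a1 Suc(2) D_q by auto
  have nk: "anc k (Suc s) \<noteq> k" using a2 Suc(2) by auto
  show ?case using Suc wt_nz[OF nq] wt_inj[OF nk] by simp
qed

definition onp :: "nat \<Rightarrow> nat \<Rightarrow> bool" where "onp k j \<longleftrightarrow> (\<exists>s \<le> D k. j = anc k s)"

definition yv :: "nat \<Rightarrow> nat \<Rightarrow> real" where
  "yv k j = (if onp k j then Yv k (D k - D j) else 0)"

lemma onp_idx: "k < m \<Longrightarrow> s \<le> D k \<Longrightarrow> D k - D (anc k s) = s"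
  using anc by auto

lemma anc_inj: assumes "k < m" "s \<le> D k" "s' \<le> D k" "anc k s = anc k s'" shows "s = s'"
  using onp_idx[OF assms(1,2)] onp_idx[OF assms(1,3)] assms(4) by metis

lemma yv_anc: "k < m \<Longrightarrow> s \<le> D k \<Longrightarrow> yv k (anc k s) = Yv k s"
  unfolding yv_def onp_def using onp_idx by auto

lemma child: assumes k: "k < m" and "i \<noteq> q" and "yv k i \<noteq> 0"
  shows "\<exists>s < D k. i = anc k s \<and> par i = anc k (Suc s)"
proof -
  from assms(3) obtain s where s: "s \<le> D k" "i = anc k s" unfolding yv_def onp_def by (auto split: if_splits)
  have "s \<noteq> D k" using anc_end[OF k] s assms(2) by auto
  then have "s < D k" using s by simp
  then show ?thesis using s by (intro exI[of _ s]) (auto simp: anc_Suc)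
qed

lemma eig: assumes k: "k < m" and j: "j < m"
  shows "(\<Sum>i<m. yv k i * Lmat m nb hq $$ (i,j)) = wt k * yv k j"
proof -
  let ?T = "\<Sum>i<m. (if i \<noteq> q \<and> par i = j then yv k i * wt i else 0)"
  have "(\<Sum>i<m. yv k i * Lmat m nb hq $$ (i,j)) =
     (\<Sum>i<m. (if i = j then yv k i * wt i else 0) - (if i \<noteq> q \<and> par i = j then yv k i * wt i else 0))"
  proof (intro sum.cong refl)
    fix i assume "i \<in> {..<m}"
    then have i: "i < m" by simp
    show "yv k i * Lmat m nb hq $$ (i,j) = (if i = j then yv k i * wt i else 0) - (if i \<noteq> q \<and> par i = j then yv k i * wt i else 0)"
      using L_ent[OF i j] par_ne[OF i] wt_q by (auto simp: algebra_simps)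
  qed
  also have "\<dots> = yv k j * wt j - ?T"
    using j by (simp add: sum_subtractf)
  finally have LHS: "(\<Sum>i<m. yv k i * Lmat m nb hq $$ (i,j)) = yv k j * wt j - ?T" .
  show ?thesis
  proof (cases "onp k j")
    case False
    have "?T = 0"
    proof (intro sum.neutral ballI)
      fix i assume "i \<in> {..<m}"
      show "(if i \<noteq> q \<and> par i = j then yv k i * wt i else 0) = 0"
      proof (rule ccontr)
        assume "(if i \<noteq> q \<and> par i = j then yv k i * wt i else 0) \<noteq> 0"
        then have "i \<noteq> q" "par i = j" "yv k i \<noteq> 0" by (auto split: if_splits)
        then obtain s where "s < D k" "par i = anc k (Suc s)" using child[OF k] by blast
        then have "onp k j" unfolding onp_def using \<open>par i = j\<close> by (intro exI[of _ "Suc s"]) auto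
        then show False using False by simp
      qed
    qed
    then show ?thesis using LHS False by (simp add: yv_def)
  next
    case True
    then obtain s' where s': "s' \<le> D k" "j = anc k s'" unfolding onp_def by auto
    show ?thesis
    proof (cases "s' = 0")
      case True
      then have jk: "j = k" using s' by (simp add: anc_0)
      have "?T = 0"
      proof (intro sum.neutral ballI)
        fix i assume "i \<in> {..<m}"
        show "(if i \<noteq> q \<and> par i = j then yv k i * wt i else 0) = 0"
        proof (rule ccontr)
          assume "(if i \<noteq> q \<and> par i = j then yv k i * wt i else 0) \<noteq> 0"
          then have "i \<noteq> q" "par i = j" "yv k i \<noteq> 0" by (auto split: if_splits)
          then obtain s where s: "s < D k" "par i = anc k (Suc s)" using child[OF k] by blast
          then have "anc k (Suc s) = anc k 0" using \<open>par i = j\<close> jk by (simp add: anc_0)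
          then have "Suc s = 0" using anc_inj[OF k, of "Suc s" 0] s by simp
          then show False by simp
        qed
      qed
      then show ?thesis using LHS jk by simp
    next
      case False
      define c where "c = anc k (s' - 1)"
      have s'1: "s' - 1 \<le> D k" "Suc (s' - 1) = s'" using s' False by auto
      have cm: "c < m" and Dc: "D c = D k - (s' - 1)" using anc[OF k s'1(1)] unfolding c_def by auto
      have cq: "c \<noteq> q" using Dc s' False D_q by auto
      have parc: "par c = j" unfolding c_def using s' s'1 by (metis anc_Suc)
      have "?T = (\<Sum>i<m. if i = c then yv k c * wt c else 0)"
      proof (intro sum.cong refl)
        fix i assume "i \<in> {..<m}"
        show "(if i \<noteq> q \<and> par i = j then yv k i * wt i else 0) = (if i = c then yv k c * wt c else 0)"
        proof (cases "i = c")
          case True then show ?thesis using cq parc by simp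
        next
          case False
          show ?thesis
          proof (rule ccontr)
            assume "(if i \<noteq> q \<and> par i = j then yv k i * wt i else 0) \<noteq> (if i = c then yv k c * wt c else 0)"
            then have "i \<noteq> q" "par i = j" "yv k i \<noteq> 0" using False by (auto split: if_splits)
            then obtain s where s: "s < D k" "i = anc k s" "par i = anc k (Suc s)" using child[OF k] by blast
            then have "anc k (Suc s) = anc k s'" using \<open>par i = j\<close> s' by simp
            then have "Suc s = s'" using anc_inj[OF k, of "Suc s" s'] s s' by simp
            then have "s = s' - 1" by simp
            then have "i = c" using s(2) unfolding c_def by simp
            then show False using False by simp
          qed
        qed
      qed
      also have "\<dots> = yv k c * wt c" using cm by simp
      finally have T: "?T = yv k c * wt c" .
      have yj: "yv k j = Yv k s'" using yv_anc[OF k s'(1)] s' by simp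
      have yc: "yv k c = Yv k (s' - 1)" using yv_anc[OF k s'1(1)] unfolding c_def by simp
      have jk: "j \<noteq> k"
      proof
        assume "j = k"
        then have "anc k s' = anc k 0" using s' by (simp add: anc_0)
        then show False using anc_inj[OF k s'(1), of 0] False by simp
      qed
      have rec: "Yv k s' = wt c * Yv k (s' - 1) / (wt j - wt k)"
        using Yv.simps(2)[of k "s' - 1"] s'1(2) s' unfolding c_def by simp
      have ne: "wt j - wt k \<noteq> 0" using wt_inj[OF jk] by simp
      have "yv k j * wt j - ?T = Yv k s' * wt j - wt c * Yv k (s' - 1)" using T yj yc by simp
      also have "\<dots> = wt k * Yv k s'" using rec ne by (simp add: field_simps)
      finally show ?thesis using LHS yj by simp
    qed
  qed
qed


lemma det_wit: "det (ctrb_mat (Lmat m nb hq) (unit_col m q) m) \<noteq> 0"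
proof -
  let ?L = "Lmat m nb hq"
  let ?e = "unit_col m q"
  let ?K = "ctrb_mat ?L ?e m"
  define Y where "Y = mat m m (\<lambda>(k,j). yv k j)"
  have L: "?L \<in> carrier_mat m m" by (simp add: Lmat_def)
  have e: "?e \<in> carrier_mat m 1" by (simp add: unit_col_def)
  have de: "dim_col ?e = 1" by (simp add: unit_col_def)
  have Y: "Y \<in> carrier_mat m m" by (simp add: Y_def)
  have K: "?K \<in> carrier_mat m m" using L by (simp add: ctrb_mat_def de)
  have YL: "(Y * ?L ^\<^sub>m s) $$ (k,j) = wt k ^ s * yv k j" if k: "k < m" and j: "j < m" for s k j
    using j
  proof (induct s arbitrary: j)
    case 0
    have "?L ^\<^sub>m 0 = 1\<^sub>m m" using L by simp
    moreover have "Y * 1\<^sub>m m = Y" by (rule right_mult_one_mat[OF Y])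
    ultimately have "Y * ?L ^\<^sub>m 0 = Y" by simp
    then show ?case using 0 k by (simp add: Y_def)
  next
    case (Suc s)
    have Ls: "?L ^\<^sub>m s \<in> carrier_mat m m" using L by simp
    have "Y * ?L ^\<^sub>m Suc s = Y * (?L ^\<^sub>m s * ?L)" by simp
    also have "\<dots> = (Y * ?L ^\<^sub>m s) * ?L"
      using assoc_mult_mat[OF Y Ls L] by simp
    finally have eq: "Y * ?L ^\<^sub>m Suc s = (Y * ?L ^\<^sub>m s) * ?L" .
    have "((Y * ?L ^\<^sub>m s) * ?L) $$ (k,j) = (\<Sum>i<m. (Y * ?L ^\<^sub>m s) $$ (k,i) * ?L $$ (i,j))"
      by (rule mult_entry[OF mult_carrier_mat[OF Y Ls] L k Suc(2)])
    also have "\<dots> = (\<Sum>i<m. wt k ^ s * (yv k i * ?L $$ (i,j)))"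
    proof (intro sum.cong refl)
      fix i assume "i \<in> {..<m}"
      then have "(Y * ?L ^\<^sub>m s) $$ (k,i) = wt k ^ s * yv k i" using Suc(1)[of i] by simp
      then show "(Y * ?L ^\<^sub>m s) $$ (k,i) * ?L $$ (i,j) = wt k ^ s * (yv k i * ?L $$ (i,j))"
        by simp
    qed
    also have "\<dots> = wt k ^ s * (\<Sum>i<m. yv k i * ?L $$ (i,j))"
      by (simp add: sum_distrib_left)
    also have "\<dots> = wt k ^ Suc s * yv k j"
      using eig[OF k Suc(2)] by simp
    finally show ?case unfolding eq .
  qed
  have Kent: "?K $$ (a,s) = (?L ^\<^sub>m s) $$ (a,q)" if a: "a < m" and s: "s < m" for a s
  proof -
    have Ls: "?L ^\<^sub>m s \<in> carrier_mat m m" using L by simp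
    have "?K $$ (a,s) = (?L ^\<^sub>m s * ?e) $$ (a,0)" using a s L by (simp add: ctrb_mat_def de)
    also have "\<dots> = (\<Sum>b<m. (?L ^\<^sub>m s) $$ (a,b) * ?e $$ (b,0))"
      by (rule mult_entry[OF Ls e a]) simp
    also have "\<dots> = (\<Sum>b<m. if b = q then (?L ^\<^sub>m s) $$ (a,q) else 0)"
      by (intro sum.cong refl) (auto simp: unit_col_def)
    also have "\<dots> = (?L ^\<^sub>m s) $$ (a,q)" using qm by simp
    finally show ?thesis .
  qed
  have YK: "(Y * ?K) $$ (k,s) = wt k ^ s * yv k q" if k: "k < m" and s: "s < m" for k s
  proof -
    have Ls: "?L ^\<^sub>m s \<in> carrier_mat m m" using L by simp
    have "(Y * ?K) $$ (k,s) = (\<Sum>a<m. Y $$ (k,a) * ?K $$ (a,s))"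
      by (rule mult_entry[OF Y K k s])
    also have "\<dots> = (\<Sum>a<m. Y $$ (k,a) * (?L ^\<^sub>m s) $$ (a,q))"
      by (intro sum.cong refl) (simp add: Kent s)
    also have "\<dots> = (Y * ?L ^\<^sub>m s) $$ (k,q)"
      by (rule mult_entry[OF Y Ls k qm, symmetric])
    also have "\<dots> = wt k ^ s * yv k q" using YL[OF k qm] .
    finally show ?thesis .
  qed
  have yq: "yv k q \<noteq> 0" if k: "k < m" for k
  proof -
    have "yv k (anc k (D k)) = Yv k (D k)" using yv_anc[OF k] by simp
    then show ?thesis using anc_end[OF k] Yv_nz[OF k] by simp
  qed
  have winj: "inj_on wt {..<m}" using wt_inj by (auto simp: inj_on_def)
  have "det (Y * ?K) \<noteq> 0"
  proof
    assume "det (Y * ?K) = 0"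
    then obtain v where v: "v \<in> carrier_vec m" "v \<noteq> 0\<^sub>v m" "(Y * ?K) *\<^sub>v v = 0\<^sub>v m"
      using det_0_iff_vec_prod_zero_field[OF mult_carrier_mat[OF Y K]] by blast
    have "(\<Sum>s<m. v $ s * wt k ^ s) = 0" if k: "k < m" for k
    proof -
      have "((Y * ?K) *\<^sub>v v) $ k = 0" using v(3) k by simp
      moreover have "((Y * ?K) *\<^sub>v v) $ k = (\<Sum>s<m. (Y * ?K) $$ (k,s) * v $ s)"
      proof -
        have YKc: "Y * ?K \<in> carrier_mat m m" using Y K by (rule mult_carrier_mat)
        have "((Y * ?K) *\<^sub>v v) $ k = row (Y * ?K) k \<bullet> v"
          using k YKc by (metis carrier_matD(1) index_mult_mat_vec)
        also have "\<dots> = (\<Sum>s\<in>{0..<m}. row (Y * ?K) k $ s * v $ s)"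
          using v(1) unfolding scalar_prod_def by simp
        also have "\<dots> = (\<Sum>s<m. (Y * ?K) $$ (k,s) * v $ s)"
          unfolding atLeast0LessThan using k YKc by (intro sum.cong refl) (metis carrier_matD(1,2) index_row(1) lessThan_iff)
        finally show ?thesis .
      qed
      ultimately have "(\<Sum>s<m. (wt k ^ s * yv k q) * v $ s) = 0"
        using YK[OF k] by simp
      then have "yv k q * (\<Sum>s<m. v $ s * wt k ^ s) = 0"
        by (simp add: sum_distrib_left algebra_simps)
      then show ?thesis using yq[OF k] by simp
    qed
    then have "\<And>s. s < m \<Longrightarrow> v $ s = 0" using vander[OF winj] by blast
    then have "v = 0\<^sub>v m" by (intro eq_vecI) (use v(1) in auto)
    then show False using v(2) by simp
  qed
  then show ?thesis using det_mult[OF Y K] by simp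
qed

end



lemma witness:
  assumes "\<forall>i<m. distinct (nb i) \<and> i \<in> set (nb i) \<and> set (nb i) \<subseteq> {..<m}"
    and "strongly_connected m nb" and "q < m"
  shows "\<exists>h. det (ctrb_mat (Lmat m nb h) (unit_col m q) m) \<noteq> 0"
  using det_wit[OF assms] by blast

definition pf :: "(real \<Rightarrow> real) \<Rightarrow> bool" where
  "pf f \<longleftrightarrow> (\<exists>p. \<forall>t. f t = poly p t)"

lemma pf_const: "pf (\<lambda>t. c)"
  unfolding pf_def by (rule exI[of _ "[:c:]"]) simp

lemma pf_id: "pf (\<lambda>t. t)"
  unfolding pf_def by (rule exI[of _ "[:0,1:]"]) simp

lemma pf_add: "pf f \<Longrightarrow> pf g \<Longrightarrow> pf (\<lambda>t. f t + g t)"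
  unfolding pf_def by (metis poly_add)

lemma pf_diff: "pf f \<Longrightarrow> pf g \<Longrightarrow> pf (\<lambda>t. f t - g t)"
  unfolding pf_def by (metis poly_diff)

lemma pf_mult: "pf f \<Longrightarrow> pf g \<Longrightarrow> pf (\<lambda>t. f t * g t)"
  unfolding pf_def by (metis poly_mult)

lemma pf_sum: "finite A \<Longrightarrow> (\<And>a. a \<in> A \<Longrightarrow> pf (f a)) \<Longrightarrow> pf (\<lambda>t. \<Sum>a\<in>A. f a t)"
  by (induct A rule: finite_induct) (auto intro: pf_add pf_const)

lemma pf_prod: "finite A \<Longrightarrow> (\<And>a. a \<in> A \<Longrightarrow> pf (f a)) \<Longrightarrow> pf (\<lambda>t. \<Prod>a\<in>A. f a t)"
  by (induct A rule: finite_induct) (auto intro: pf_mult pf_const)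

definition pfm :: "(real \<Rightarrow> real mat) \<Rightarrow> nat \<Rightarrow> nat \<Rightarrow> bool" where
  "pfm M a b \<longleftrightarrow> (\<forall>t. M t \<in> carrier_mat a b) \<and> (\<forall>i<a. \<forall>j<b. pf (\<lambda>t. M t $$ (i,j)))"

lemma pfm_mult: assumes A: "pfm A a b" and B: "pfm B b c" shows "pfm (\<lambda>t. A t * B t) a c"
proof -
  have cA: "\<And>t. A t \<in> carrier_mat a b" and cB: "\<And>t. B t \<in> carrier_mat b c"
    using A B unfolding pfm_def by auto
  have eA: "\<And>i j. i < a \<Longrightarrow> j < b \<Longrightarrow> pf (\<lambda>t. A t $$ (i,j))"
   and eB: "\<And>i j. i < b \<Longrightarrow> j < c \<Longrightarrow> pf (\<lambda>t. B t $$ (i,j))"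
    using A B unfolding pfm_def by auto
  show ?thesis unfolding pfm_def
  proof (intro conjI allI impI)
    fix t show "A t * B t \<in> carrier_mat a c" using cA cB by (rule mult_carrier_mat)
  next
    fix i j assume i: "i < a" and j: "j < c"
    have "pf (\<lambda>t. \<Sum>k<b. A t $$ (i,k) * B t $$ (k,j))"
    proof (rule pf_sum)
      fix k assume "k \<in> {..<b}"
      then show "pf (\<lambda>t. A t $$ (i,k) * B t $$ (k,j))"
        using eA[OF i] eB[OF _ j] by (intro pf_mult) auto
    qed simp
    moreover have "\<And>t. (A t * B t) $$ (i,j) = (\<Sum>k<b. A t $$ (i,k) * B t $$ (k,j))"
      using mult_entry[OF cA cB i j] .
    ultimately show "pf (\<lambda>t. (A t * B t) $$ (i,j))" by simp
  qed
qed

lemma pfm_pow: assumes "pfm A a a" shows "pfm (\<lambda>t. A t ^\<^sub>m p) a a"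
proof (induct p)
  case 0
  have "\<And>t. A t ^\<^sub>m 0 = 1\<^sub>m a" using assms unfolding pfm_def by auto
  then show ?case unfolding pfm_def by (auto intro: pf_const)
next
  case (Suc p)
  then show ?case using pfm_mult[OF Suc assms] by simp
qed

lemma pfm_const: "M \<in> carrier_mat a b \<Longrightarrow> pfm (\<lambda>t. M) a b"
  unfolding pfm_def by (auto intro: pf_const)

lemma pf_det: assumes "pfm A a a" shows "pf (\<lambda>t. det (A t))"
proof -
  have "\<And>t. det (A t) = (\<Sum>p\<in>{p. p permutes {0..<a}}. signof p * (\<Prod>i=0..<a. A t $$ (i, p i)))"
  proof -
    fix t
    have "A t \<in> carrier_mat a a" using assms unfolding pfm_def by auto
    then show "det (A t) = (\<Sum>p\<in>{p. p permutes {0..<a}}. signof p * (\<Prod>i=0..<a. A t $$ (i, p i)))"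
      by (rule det_def')
  qed
  moreover have "pf (\<lambda>t. \<Sum>p\<in>{p. p permutes {0..<a}}. signof p * (\<Prod>i=0..<a. A t $$ (i, p i)))"
  proof (rule pf_sum)
    show "finite {p. p permutes {0..<a}}" by (simp add: finite_permutations)
    fix p assume p: "p \<in> {p. p permutes {0..<a}}"
    have pi: "p i < a" if "i < a" for i using p that permutes_in_image by fastforce
    have "pf (\<lambda>t. \<Prod>i=0..<a. A t $$ (i, p i))"
    proof (rule pf_prod)
      fix i assume "i \<in> {0..<a}"
      then show "pf (\<lambda>t. A t $$ (i, p i))" using assms pi unfolding pfm_def by auto
    qed simp
    then show "pf (\<lambda>t. signof p * (\<Prod>i=0..<a. A t $$ (i, p i)))"
      by (rule pf_mult[OF pf_const])
  qed
  ultimately show ?thesis by simp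
qed

lemma pfm_ctrb: assumes "pfm L m m"
  shows "pfm (\<lambda>t. ctrb_mat (L t) (unit_col m q) k) m k"
proof -
  have e: "unit_col m q \<in> carrier_mat m 1" by (simp add: unit_col_def)
  have de: "dim_col (unit_col m q) = 1" by (simp add: unit_col_def)
  have P: "pfm (\<lambda>t. L t ^\<^sub>m s * unit_col m q) m 1" for s
    using pfm_mult[OF pfm_pow[OF assms] pfm_const[OF e]] .
  show ?thesis
    unfolding pfm_def
  proof (intro conjI allI impI)
    fix t have "L t \<in> carrier_mat m m" using assms unfolding pfm_def by auto
    then show "ctrb_mat (L t) (unit_col m q) k \<in> carrier_mat m k"
      by (auto simp: ctrb_mat_def de)
  next
    fix i j assume ij: "i < m" "j < k"
    have eq: "ctrb_mat (L t) (unit_col m q) k $$ (i,j) = (L t ^\<^sub>m j * unit_col m q) $$ (i,0)" for t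
    proof -
      have "L t \<in> carrier_mat m m" using assms unfolding pfm_def by auto
      then show ?thesis using ij by (simp add: ctrb_mat_def de)
    qed
    show "pf (\<lambda>t. ctrb_mat (L t) (unit_col m q) k $$ (i,j))"
      unfolding eq using P[of j] ij unfolding pfm_def by auto
  qed
qed

lemma pfm_Lmat: assumes "\<And>i j. pf (\<lambda>t. h t i j)"
  shows "pfm (\<lambda>t. Lmat m nb (h t)) m m"
  unfolding pfm_def
proof (intro conjI allI impI)
  fix t show "Lmat m nb (h t) \<in> carrier_mat m m" by (simp add: Lmat_def)
next
  fix i j assume ij: "i < m" "j < m"
  have "pf (\<lambda>t. \<Sum>s<length (nb i). h t i (nb i ! s) *
     ((if i = j then 1 else 0) - (if j = nb i ! s then 1 else 0)))"
  proof (rule pf_sum)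
    fix s show "pf (\<lambda>t. h t i (nb i ! s) * ((if i = j then 1 else 0) - (if j = nb i ! s then 1 else 0)))"
      by (intro pf_mult assms pf_const)
  qed simp
  then show "pf (\<lambda>t. Lmat m nb (h t) $$ (i, j))" using ij by (simp add: Lmat_def)
qed

definition lag :: "nat \<Rightarrow> nat \<Rightarrow> real \<Rightarrow> real" where
  "lag m q t = (\<Prod>r\<in>{..<m}-{q}. (t - real r) / (real q - real r))"

lemma pf_lag: "pf (lag m q)"
proof -
  have "pf (\<lambda>t. \<Prod>r\<in>{..<m}-{q}. (t - real r) * (1 / (real q - real r)))"
  proof (rule pf_prod)
    fix r
    show "pf (\<lambda>t. (t - real r) * (1 / (real q - real r)))"
      by (intro pf_mult pf_diff pf_id pf_const)
  qed simp
  then show ?thesis unfolding lag_def by simp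
qed

lemma lag_node: assumes "p < m" "q < m" shows "lag m q (real p) = (if p = q then 1 else 0)"
proof (cases "p = q")
  case True
  then show ?thesis unfolding lag_def by (auto intro!: prod.neutral)
next
  case False
  then have "p \<in> {..<m}-{q}" using assms by auto
  have "(\<Prod>r\<in>{..<m}-{q}. (real p - real r) / (real q - real r)) = 0"
    by (rule prod_zero) (use \<open>p \<in> {..<m}-{q}\<close> in auto)
  then show ?thesis unfolding lag_def using False by simp
qed



theorem lemma3:
  fixes m n :: nat and nb :: "nat \<Rightarrow> nat list"
  assumes "n \<ge> 1"
    and "\<forall>i<m. distinct (nb i) \<and> i \<in> set (nb i) \<and> set (nb i) \<subseteq> {..<m}"
    and "strongly_connected m nb"
  shows "\<exists>H :: nat \<Rightarrow> real mat.
           (\<forall>i<m. H i \<in> carrier_mat n (n * length (nb i))) \<and>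
           (\<forall>q<m. controllable (msum (n * m) m (\<lambda>i. Btil m n i * H i * Ctil m n nb i)) (Btil m n q)
                 \<and> ctrb_index (msum (n * m) m (\<lambda>i. Btil m n i * H i * Ctil m n nb i)) (Btil m n q) = m)"
proof -
  have n: "n > 0" using assms(1) by simp
  have "\<forall>q. \<exists>h. q < m \<longrightarrow> det (ctrb_mat (Lmat m nb h) (unit_col m q) m) \<noteq> 0"
    using witness[OF assms(2,3)] by blast
  then obtain hw where hw: "\<And>q. q < m \<Longrightarrow> det (ctrb_mat (Lmat m nb (hw q)) (unit_col m q) m) \<noteq> 0"
    by metis
  define h where "h t i j = (\<Sum>q<m. hw q i j * lag m q t)" for t i j
  have pfh: "\<And>i j. pf (\<lambda>t. h t i j)"
    unfolding h_def by (auto intro!: pf_sum pf_mult pf_const pf_lag)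
  have hnode: "h (real q) = hw q" if "q < m" for q
  proof (intro ext)
    fix i j
    have "h (real q) i j = (\<Sum>q'<m. if q' = q then hw q' i j else 0)"
      unfolding h_def using lag_node[OF that] by (intro sum.cong) auto
    then show "h (real q) i j = hw q i j" using that by simp
  qed
  define D where "D q t = det (ctrb_mat (Lmat m nb (h t)) (unit_col m q) m)" for q t
  have "pf (D q)" for q
    unfolding D_def by (rule pf_det[OF pfm_ctrb[OF pfm_Lmat[OF pfh]]])
  then have "\<forall>q. \<exists>p. \<forall>t. D q t = poly p t" unfolding pf_def by blast
  then obtain P where P: "\<And>q t. D q t = poly (P q) t" by metis
  have Pnz: "P q \<noteq> 0" if "q < m" for q
  proof
    assume "P q = 0"
    then have "D q (real q) = 0" using P by simp
    then show False using hw[OF that] hnode[OF that] unfolding D_def by simp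
  qed
  let ?P = "\<Prod>q<m. P q"
  have "?P \<noteq> 0" using Pnz by auto
  then have "finite {x. poly ?P x = 0}" by (rule poly_roots_finite)
  then obtain t0 where t0: "t0 \<notin> {x. poly ?P x = 0}"
    using ex_new_if_finite[OF infinite_UNIV_char_0] by blast
  have Dnz: "D q t0 \<noteq> 0" if "q < m" for q
    using t0 that P by (auto simp: poly_prod)
  define H where "H i = Hmat n nb (h t0) i" for i
  have L: "Lmat m nb (h t0) \<in> carrier_mat m m" by (simp add: Lmat_def)
  show ?thesis
  proof (intro exI conjI allI impI)
    fix i assume "i < m"
    show "H i \<in> carrier_mat n (n * length (nb i))" by (simp add: H_def Hmat_def)
  next
    fix q assume q: "q < m"
    have F: "msum (n * m) m (\<lambda>i. Btil m n i * H i * Ctil m n nb i) = kron (Lmat m nb (h t0)) (1\<^sub>m n)"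
      unfolding H_def by (rule F_eq[OF n])
    show "controllable (msum (n * m) m (\<lambda>i. Btil m n i * H i * Ctil m n nb i)) (Btil m n q)"
      "ctrb_index (msum (n * m) m (\<lambda>i. Btil m n i * H i * Ctil m n nb i)) (Btil m n q) = m"
      unfolding F using reduce_ctrb[OF L n] Dnz[OF q] unfolding D_def by auto
  qed
qed

end
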